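(* Let $\mu_1,\mu_2,\mu$ be probability measures on a measurable space $(E,\mathscr B)$. Then for every $p>1$, $$\mathrm{Ent}(\mu_1|\mu_2)\le p\,\mathrm{Ent}(\mu_1|\mu)+(p-1)\log\int_E\Big(\frac{\mathrm d\mu}{\mathrm d\mu_2}\Big)^{\frac p{p-1}}\mathrm d\mu_2,$$ where the right-hand side is set to be $+\infty$ if $\frac{\mathrm d\mu_1}{\mathrm d\mu}$ or $\frac{\mathrm d\mu}{\mathrm d\mu_2}$ does not exist.
   Context: $\mathrm{Ent}(\nu|\lambda)=\int\log\frac{\mathrm d\nu}{\mathrm d\lambda}\,\mathrm d\nu$ if $\nu\ll\lambda$, and $+\infty$ otherwise. *)

theory Defs
  imports "HOL-Probability.Probability"
begin

definition eln :: "ennreal \<Rightarrow> ereal" where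
  "eln x = (if x = \<infinity> then \<infinity> else if x = 0 then -\<infinity> else ereal (ln (enn2real x)))"

text \<open>The integral is the Lebesgue integral in the extended sense:
  positive part minus negative part (the negative part is finite for probability measures).\<close>
definition Ent :: "'a measure \<Rightarrow> 'a measure \<Rightarrow> ereal" where
  "Ent \<nu> L =
    (if absolutely_continuous L \<nu> \<and> sets \<nu> = sets L then
       enn2ereal (\<integral>\<^sup>+ x. ennreal (ln (enn2real (RN_deriv L \<nu> x))) \<partial>\<nu>)
       - enn2ereal (\<integral>\<^sup>+ x. ennreal (- ln (enn2real (RN_deriv L \<nu> x))) \<partial>\<nu>)
     else \<infinity>)"

end

theory Submission
  imports Defs
begin

lemma ptw_neg: fixes r :: ennreal shows "r * ennreal (- ln (enn2real r)) \<le> 1"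
proof (cases r)
  case (real t)
  show ?thesis
  proof (cases "t = 0")
    case True then show ?thesis using real by simp
  next
    case False
    then have t: "t > 0" using real by simp
    have "ln (1/t) \<le> 1/t - 1" using t by (intro ln_le_minus_one) simp
    then have "- ln t \<le> 1/t - 1" using t by (simp add: ln_div)
    then have "t * (- ln t) \<le> t * (1/t - 1)" using t by (intro mult_left_mono) auto
    also have "\<dots> \<le> 1" using t by (simp add: field_simps)
    finally have "t * (- ln t) \<le> 1" .
    have "r * ennreal (- ln (enn2real r)) = ennreal (t * (- ln t))"
      using real t ennreal_mult'[of t "- ln t"] by simp
    then show ?thesis using \<open>t * (- ln t) \<le> 1\<close> by simp
  qed
next
  case top then show ?thesis by simp
qed

lemma neg_part_le:
  assumes "prob_space N" "prob_space M" "absolutely_continuous M N" "sets N = sets M"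
  shows "(\<integral>\<^sup>+ x. ennreal (- ln (enn2real (RN_deriv M N x))) \<partial>N) \<le> 1"
proof -
  interpret M: prob_space M by fact
  have "(\<integral>\<^sup>+ x. ennreal (- ln (enn2real (RN_deriv M N x))) \<partial>N)
     = (\<integral>\<^sup>+ x. RN_deriv M N x * ennreal (- ln (enn2real (RN_deriv M N x))) \<partial>M)"
    using assms by (intro M.RN_deriv_nn_integral) auto
  also have "\<dots> \<le> (\<integral>\<^sup>+ x. 1 \<partial>M)" by (intro nn_integral_mono ptw_neg)
  also have "\<dots> = 1" by (simp add: M.emeasure_space_1)
  finally show ?thesis .
qed

lemma parts_integral:
  fixes h :: "'a \<Rightarrow> real"
  assumes "integrable M h"
  shows "enn2ereal (\<integral>\<^sup>+ x. ennreal (h x) \<partial>M) - enn2ereal (\<integral>\<^sup>+ x. ennreal (- h x) \<partial>M) = ereal (\<integral>x. h x \<partial>M)"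
proof -
  have f: "(\<integral>\<^sup>+ x. ennreal (h x) \<partial>M) \<noteq> \<infinity>" "(\<integral>\<^sup>+ x. ennreal (- h x) \<partial>M) \<noteq> \<infinity>"
    using assms unfolding real_integrable_def by auto
  define A where "A = (\<integral>\<^sup>+ x. ennreal (h x) \<partial>M)"
  define B where "B = (\<integral>\<^sup>+ x. ennreal (- h x) \<partial>M)"
  have "A = ennreal (enn2real A)" "B = ennreal (enn2real B)" using f unfolding A_def B_def by (simp_all add: ennreal_enn2real_if)
  then have "enn2ereal A = ereal (enn2real A)" "enn2ereal B = ereal (enn2real B)"
    by (metis enn2ereal_ennreal enn2real_nonneg)+
  then show ?thesis unfolding real_lebesgue_integral_def[OF assms] A_def[symmetric] B_def[symmetric]
    by simp
qed

lemma ptw_main: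
  fixes F G z p :: real
  assumes "F > 0" "G > 0" "z > 0" "p > 1"
  shows "ln (F * G) \<le> p * ln F + (p - 1) * ln z + (p - 1) * (G powr (1 / (p - 1)) / (F * z) - 1)"
proof -
  define t where "t = ln G / (p - 1) - ln F - ln z"
  have e: "G powr (1 / (p - 1)) / (F * z) = exp t"
  proof -
    have "exp t = exp (ln G / (p - 1)) / exp (ln F) / exp (ln z)"
      unfolding t_def by (simp only: exp_diff)
    also have "\<dots> = exp (ln G / (p - 1)) / (F * z)" using assms by simp
    finally show ?thesis using assms unfolding powr_def by (simp add: mult.commute)
  qed
  have "t \<le> exp t - 1" using exp_ge_add_one_self[of t] by linarith
  then have "(p - 1) * t \<le> (p - 1) * (exp t - 1)" using assms by (intro mult_left_mono) auto
  moreover have "(p - 1) * t = ln G - (p - 1) * ln F - (p - 1) * ln z"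
    using assms unfolding t_def by (simp add: field_simps)
  moreover have "ln (F * G) = ln F + ln G" using assms by (simp add: ln_mult)
  ultimately show ?thesis unfolding e by (simp add: algebra_simps)
qed

lemma powr_comb:
  fixes G p :: real
  assumes "G \<ge> 0" "p > 1"
  shows "G * G powr (1 / (p - 1)) = G powr (p / (p - 1))"
proof (cases "G = 0")
  case True then show ?thesis by simp
next
  case False
  then have "G powr (p / (p - 1)) = G powr (1 + 1 / (p - 1))"
    using assms by (simp add: field_simps)
  also have "\<dots> = G * G powr (1 / (p - 1))" using False assms by (simp add: powr_add)
  finally show ?thesis by simp
qed

lemma ac_trans: "absolutely_continuous A B \<Longrightarrow> absolutely_continuous B C \<Longrightarrow> absolutely_continuous A C"
  unfolding absolutely_continuous_def by blast

theorem lemma2p1: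
  fixes \<mu>1 \<mu>2 \<mu> :: "'a measure" and p :: real
  assumes "prob_space \<mu>1" and "prob_space \<mu>2" and "prob_space \<mu>"
    and "sets \<mu>1 = sets \<mu>" and "sets \<mu>2 = sets \<mu>"
    and "p > 1"
  shows "Ent \<mu>1 \<mu>2 \<le>
    (if absolutely_continuous \<mu> \<mu>1 \<and> absolutely_continuous \<mu>2 \<mu> then
       ereal p * Ent \<mu>1 \<mu> + ereal (p - 1) *
         eln (\<integral>\<^sup>+ x. ennreal (enn2real (RN_deriv \<mu>2 \<mu> x) powr (p / (p - 1))) \<partial>\<mu>2)
     else \<infinity>)"
proof (cases "absolutely_continuous \<mu> \<mu>1 \<and> absolutely_continuous \<mu>2 \<mu>")
  case False then show ?thesis by (simp only: if_not_P[OF False]) simp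
next
  case True
  then have ac1: "absolutely_continuous \<mu> \<mu>1" and ac2: "absolutely_continuous \<mu>2 \<mu>" by auto
  have ac12: "absolutely_continuous \<mu>2 \<mu>1" using ac1 ac2 ac_trans by blast
  interpret P1: prob_space \<mu>1 by fact
  interpret P2: prob_space \<mu>2 by fact
  interpret P: prob_space \<mu> by fact
  note s1 = \<open>sets \<mu>1 = sets \<mu>\<close> and s2 = \<open>sets \<mu>2 = sets \<mu>\<close>
  have s12: "sets \<mu>1 = sets \<mu>2" using s1 s2 by simp
  have p: "p > 1" by fact
  define F where "F x = enn2real (RN_deriv \<mu> \<mu>1 x)" for x
  define G where "G x = enn2real (RN_deriv \<mu>2 \<mu> x)" for x
  define K where "K x = enn2real (RN_deriv \<mu>2 \<mu>1 x)" for x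
  define q where "q = p / (p - 1)"
  define Z where "Z = (\<integral>\<^sup>+ x. ennreal (G x powr q) \<partial>\<mu>2)"
  have Fm[measurable]: "F \<in> borel_measurable \<mu>" unfolding F_def by measurable
  have Gm[measurable]: "G \<in> borel_measurable \<mu>2" unfolding G_def by measurable
  have Km[measurable]: "K \<in> borel_measurable \<mu>2" unfolding K_def by measurable
  have Fm1[measurable]: "F \<in> borel_measurable \<mu>1" using Fm measurable_cong_sets[OF s1 refl] by blast
  have Gm1[measurable]: "G \<in> borel_measurable \<mu>1" using Gm measurable_cong_sets[OF s12 refl] by blast
  have Km1[measurable]: "K \<in> borel_measurable \<mu>1" using Km measurable_cong_sets[OF s12 refl] by blast
  have Gm0[measurable]: "G \<in> borel_measurable \<mu>" using Gm measurable_cong_sets[OF s2 refl] by blast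

  have Ent1: "Ent \<mu>1 \<mu> = enn2ereal (\<integral>\<^sup>+ x. ennreal (ln (F x)) \<partial>\<mu>1)
       - enn2ereal (\<integral>\<^sup>+ x. ennreal (- ln (F x)) \<partial>\<mu>1)"
    unfolding Ent_def F_def using ac1 s1 by simp
  have Ent12: "Ent \<mu>1 \<mu>2 = enn2ereal (\<integral>\<^sup>+ x. ennreal (ln (K x)) \<partial>\<mu>1)
       - enn2ereal (\<integral>\<^sup>+ x. ennreal (- ln (K x)) \<partial>\<mu>1)"
    unfolding Ent_def K_def using ac12 s12 by simp
  have negF: "(\<integral>\<^sup>+ x. ennreal (- ln (F x)) \<partial>\<mu>1) \<le> 1"
    unfolding F_def using assms(1,3) ac1 s1 by (rule neg_part_le)
  have negK: "(\<integral>\<^sup>+ x. ennreal (- ln (K x)) \<partial>\<mu>1) \<le> 1"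
    unfolding K_def using assms(1,2) ac12 s12 by (rule neg_part_le)
  have Ent1_ninf: "Ent \<mu>1 \<mu> \<noteq> - \<infinity>"
  proof -
    have "enn2ereal (\<integral>\<^sup>+ x. ennreal (- ln (F x)) \<partial>\<mu>1) \<le> 1"
      using negF by (metis enn2ereal_ennreal ennreal_1 less_eq_ennreal.rep_eq zero_le_one one_ereal_def)
    moreover have "enn2ereal (\<integral>\<^sup>+ x. ennreal (ln (F x)) \<partial>\<mu>1) \<ge> 0" by simp
    ultimately show ?thesis unfolding Ent1 by (auto simp: minus_ereal_def)
  qed
  have fin1: "AE x in \<mu>1. RN_deriv \<mu> \<mu>1 x \<noteq> \<infinity>"
    using absolutely_continuous_AE[OF s1 ac1 P.RN_deriv_finite[OF _ ac1 s1]] P1.sigma_finite_measure_axioms by blast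
  have fin2': "AE x in \<mu>2. RN_deriv \<mu>2 \<mu> x \<noteq> \<infinity>"
    using P2.RN_deriv_finite[OF _ ac2 s2[symmetric]] P.sigma_finite_measure_axioms by blast
  have fin2: "AE x in \<mu>1. RN_deriv \<mu>2 \<mu> x \<noteq> \<infinity>"
    using absolutely_continuous_AE[OF s12 ac12 fin2'] .
  have fin2m: "AE x in \<mu>. RN_deriv \<mu>2 \<mu> x \<noteq> \<infinity>"
    using absolutely_continuous_AE[OF s2[symmetric] ac2 fin2'] .
  have dens1: "density \<mu> (RN_deriv \<mu> \<mu>1) = \<mu>1" using P.density_RN_deriv[OF ac1 s1] .
  have dens2: "density \<mu>2 (RN_deriv \<mu>2 \<mu>) = \<mu>" using P2.density_RN_deriv[OF ac2 s2[symmetric]] .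
  have pos1: "AE x in \<mu>1. RN_deriv \<mu> \<mu>1 x \<noteq> 0"
  proof -
    have "AE x in density \<mu> (RN_deriv \<mu> \<mu>1). RN_deriv \<mu> \<mu>1 x \<noteq> 0"
      by (subst AE_density) auto
    then show ?thesis by (simp only: dens1)
  qed
  have pos2m: "AE x in \<mu>. RN_deriv \<mu>2 \<mu> x \<noteq> 0"
  proof -
    have "AE x in density \<mu>2 (RN_deriv \<mu>2 \<mu>). RN_deriv \<mu>2 \<mu> x \<noteq> 0"
      by (subst AE_density) auto
    then show ?thesis by (simp only: dens2)
  qed
  have pos2: "AE x in \<mu>1. RN_deriv \<mu>2 \<mu> x \<noteq> 0"
    using absolutely_continuous_AE[OF s1 ac1 pos2m] .
  have chain2: "AE x in \<mu>2. RN_deriv \<mu>2 \<mu> x * RN_deriv \<mu> \<mu>1 x = RN_deriv \<mu>2 \<mu>1 x"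
  proof (rule P2.RN_deriv_unique)
    have m: "RN_deriv \<mu> \<mu>1 \<in> borel_measurable \<mu>2"
      using borel_measurable_RN_deriv measurable_cong_sets[OF s2 refl] by blast
    show "(\<lambda>x. RN_deriv \<mu>2 \<mu> x * RN_deriv \<mu> \<mu>1 x) \<in> borel_measurable \<mu>2" using m by measurable
    show "density \<mu>2 (\<lambda>x. RN_deriv \<mu>2 \<mu> x * RN_deriv \<mu> \<mu>1 x) = \<mu>1"
      using density_density_eq[OF borel_measurable_RN_deriv m, symmetric] dens1 dens2 by simp
  qed
  have chain: "AE x in \<mu>1. RN_deriv \<mu>2 \<mu> x * RN_deriv \<mu> \<mu>1 x = RN_deriv \<mu>2 \<mu>1 x"
    using absolutely_continuous_AE[OF s12 ac12 chain2] .
  have good: "AE x in \<mu>1. F x > 0 \<and> G x > 0 \<and> K x = F x * G x"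
    using fin1 fin2 pos1 pos2 chain
  proof eventually_elim
    case (elim x)
    then show ?case unfolding F_def G_def K_def
      by (auto simp: enn2real_mult[symmetric] mult.commute enn2real_positive_iff less_top zero_less_iff_neq_zero
         simp del: enn2real_mult)
  qed
  have Gnn: "G x \<ge> 0" for x unfolding G_def by simp
  have Fnn: "F x \<ge> 0" for x unfolding F_def by simp
  have Z0: "Z \<noteq> 0"
  proof
    assume "Z = 0"
    then have "AE x in \<mu>2. ennreal (G x powr q) = 0"
      unfolding Z_def by (subst (asm) nn_integral_0_iff_AE) auto
    then have "AE x in \<mu>2. RN_deriv \<mu>2 \<mu> x = 0" using fin2'
    proof eventually_elim
      case (elim x)
      then have "G x = 0" using Gnn[of x] by (simp add: ennreal_eq_0_iff)
      then show ?case using elim unfolding G_def by (auto simp: enn2real_eq_0_iff)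
    qed
    then have "(\<integral>\<^sup>+ x. RN_deriv \<mu>2 \<mu> x \<partial>\<mu>2) = 0"
      by (simp add: nn_integral_0_iff_AE)
    moreover have "emeasure \<mu> (space \<mu>) = (\<integral>\<^sup>+ x. RN_deriv \<mu>2 \<mu> x \<partial>\<mu>2)"
    proof -
      have "emeasure \<mu> (space \<mu>) = emeasure (density \<mu>2 (RN_deriv \<mu>2 \<mu>)) (space \<mu>2)"
        using dens2 sets_eq_imp_space_eq[OF s2] by simp
      also have "\<dots> = (\<integral>\<^sup>+ x. RN_deriv \<mu>2 \<mu> x * indicator (space \<mu>2) x \<partial>\<mu>2)"
        by (rule emeasure_density) auto
      also have "\<dots> = (\<integral>\<^sup>+ x. RN_deriv \<mu>2 \<mu> x \<partial>\<mu>2)"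
        by (intro nn_integral_cong) auto
      finally show ?thesis .
    qed
    ultimately show False using P.emeasure_space_1 by simp
  qed
  have rhs: "(if absolutely_continuous \<mu> \<mu>1 \<and> absolutely_continuous \<mu>2 \<mu> then
       ereal p * Ent \<mu>1 \<mu> + ereal (p - 1) *
         eln (\<integral>\<^sup>+ x. ennreal (enn2real (RN_deriv \<mu>2 \<mu> x) powr (p / (p - 1))) \<partial>\<mu>2)
     else \<infinity>) = ereal p * Ent \<mu>1 \<mu> + ereal (p - 1) * eln Z"
    unfolding if_P[OF True] Z_def G_def q_def ..
  have elnZ: "eln Z \<noteq> - \<infinity>" using Z0 unfolding eln_def by auto
  have negF': "(\<integral>\<^sup>+ x. ennreal (- ln (F x)) \<partial>\<mu>1) \<noteq> \<infinity>" using negF by (auto simp: top_unique)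
  have negK': "(\<integral>\<^sup>+ x. ennreal (- ln (K x)) \<partial>\<mu>1) \<noteq> \<infinity>" using negK by (auto simp: top_unique)
  have "Ent \<mu>1 \<mu>2 \<le> ereal p * Ent \<mu>1 \<mu> + ereal (p - 1) * eln Z"
  proof (cases "(\<integral>\<^sup>+ x. ennreal (ln (F x)) \<partial>\<mu>1) = \<infinity>")
    case True
    then have "Ent \<mu>1 \<mu> = \<infinity>" unfolding Ent1 using negF' by (cases "(\<integral>\<^sup>+ x. ennreal (- ln (F x)) \<partial>\<mu>1)") auto
    moreover have "ereal (p - 1) * eln Z \<noteq> - \<infinity>" using elnZ p by (cases "eln Z") auto
    ultimately show ?thesis using p by auto
  next
    case posF: False
    show ?thesis
    proof (cases "Z = \<infinity>")
      case True
      then have "eln Z = \<infinity>" unfolding eln_def by simp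
      then have "ereal (p - 1) * eln Z = \<infinity>" using p by simp
      moreover have "ereal p * Ent \<mu>1 \<mu> \<noteq> - \<infinity>" using Ent1_ninf p by (cases "Ent \<mu>1 \<mu>") auto
      ultimately show ?thesis by auto
    next
      case Zfin: False
      define z where "z = enn2real Z"
      have Zz: "Z = ennreal z" using Zfin unfolding z_def by (simp add: ennreal_enn2real_if)
      have z0: "z > 0" using Z0 Zz by (cases "z > 0") (auto simp: ennreal_eq_0_iff)
      have elnz: "eln Z = ereal (ln z)" using Zz z0 Zfin unfolding eln_def by simp
      have intF: "integrable \<mu>1 (\<lambda>x. ln (F x))"
        unfolding real_integrable_def using posF negF' by simp
      have EntF: "Ent \<mu>1 \<mu> = ereal (\<integral>x. ln (F x) \<partial>\<mu>1)"
        unfolding Ent1 by (rule parts_integral[OF intF])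
      define H where "H x = G x powr (1 / (p - 1)) / (F x * z)" for x
      have Hm[measurable]: "H \<in> borel_measurable \<mu>1" unfolding H_def by measurable
      have Hnn: "H x \<ge> 0" for x unfolding H_def using Fnn[of x] Gnn[of x] z0 by simp
      have HI: "(\<integral>\<^sup>+ x. ennreal (H x) \<partial>\<mu>1) \<le> 1"
      proof -
        have Hm0: "H \<in> borel_measurable \<mu>" using Hm measurable_cong_sets[OF s1 refl] by blast
        have "(\<integral>\<^sup>+ x. ennreal (H x) \<partial>\<mu>1) = (\<integral>\<^sup>+ x. RN_deriv \<mu> \<mu>1 x * ennreal (H x) \<partial>\<mu>)"
          using ac1 s1 Hm0 by (intro P.RN_deriv_nn_integral) auto
        also have "\<dots> \<le> (\<integral>\<^sup>+ x. ennreal (G x powr (1 / (p - 1)) * (1 / z)) \<partial>\<mu>)"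
        proof (intro nn_integral_mono_AE)
          have "AE x in \<mu>. RN_deriv \<mu> \<mu>1 x \<noteq> \<infinity>"
            using P.RN_deriv_finite[OF _ ac1 s1] P1.sigma_finite_measure_axioms by blast
          then show "AE x in \<mu>. RN_deriv \<mu> \<mu>1 x * ennreal (H x) \<le> ennreal (G x powr (1 / (p - 1)) * (1 / z))"
          proof eventually_elim
            case (elim x)
            then have r: "RN_deriv \<mu> \<mu>1 x = ennreal (F x)" unfolding F_def by (simp add: ennreal_enn2real_if)
            show ?case
            proof (cases "F x = 0")
              case True then show ?thesis using r by simp
            next
              case False
              then have "F x * H x = G x powr (1 / (p - 1)) * (1 / z)"
                unfolding H_def using z0 by (simp add: field_simps)
              then show ?thesis using r Fnn[of x] by (simp add: ennreal_mult[symmetric] Hnn)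
            qed
          qed
        qed
        also have "\<dots> = (\<integral>\<^sup>+ x. RN_deriv \<mu>2 \<mu> x * ennreal (G x powr (1 / (p - 1)) * (1 / z)) \<partial>\<mu>2)"
          using ac2 s2 by (intro P2.RN_deriv_nn_integral) auto
        also have "\<dots> = (\<integral>\<^sup>+ x. ennreal (G x powr q) * ennreal (1 / z) \<partial>\<mu>2)"
        proof (intro nn_integral_cong_AE)
          show "AE x in \<mu>2. RN_deriv \<mu>2 \<mu> x * ennreal (G x powr (1 / (p - 1)) * (1 / z)) = ennreal (G x powr q) * ennreal (1 / z)"
            using fin2'
          proof eventually_elim
            case (elim x)
            then have r: "RN_deriv \<mu>2 \<mu> x = ennreal (G x)" unfolding G_def by (simp add: ennreal_enn2real_if)
            have "G x * (G x powr (1 / (p - 1)) * (1 / z)) = G x powr q * (1 / z)"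
              using powr_comb[OF Gnn p] unfolding q_def by simp
            then show ?case using r Gnn[of x] z0 by (simp add: ennreal_mult[symmetric])
          qed
        qed
        also have "\<dots> = Z * ennreal (1 / z)" unfolding Z_def by (rule nn_integral_multc) measurable
        also have "\<dots> = 1" using Zz z0 by (simp add: ennreal_mult[symmetric])
        finally show ?thesis .
      qed
      have HI': "(\<integral>\<^sup>+ x. ennreal (H x) \<partial>\<mu>1) < \<infinity>"
        using le_less_trans[OF HI, of \<infinity>] by simp
      have intH: "integrable \<mu>1 H"
        using HI' Hnn by (intro integrableI_nonneg) auto
      have intH1: "(\<integral>x. H x \<partial>\<mu>1) \<le> 1"
      proof -
        have "(\<integral>x. H x \<partial>\<mu>1) = enn2real (\<integral>\<^sup>+ x. ennreal (H x) \<partial>\<mu>1)"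
          using Hnn by (intro integral_eq_nn_integral) auto
        also have "\<dots> \<le> enn2real 1" using HI by (intro enn2real_mono) auto
        finally show ?thesis by simp
      qed
      define h where "h x = p * ln (F x) + (p - 1) * H x + (p - 1) * (ln z - 1)" for x
      have inth: "integrable \<mu>1 h"
        unfolding h_def using intF intH by (intro Bochner_Integration.integrable_add) auto
      have inth_eq: "(\<integral>x. h x \<partial>\<mu>1) = p * (\<integral>x. ln (F x) \<partial>\<mu>1) + (p - 1) * (\<integral>x. H x \<partial>\<mu>1) + (p - 1) * (ln z - 1)"
        unfolding h_def
        using intF intH by (simp add: P1.prob_space)
      have hle: "(\<integral>x. h x \<partial>\<mu>1) \<le> p * (\<integral>x. ln (F x) \<partial>\<mu>1) + (p - 1) * ln z"
      proof -
        have "(p - 1) * (\<integral>x. H x \<partial>\<mu>1) \<le> (p - 1) * 1" using intH1 p by (intro mult_left_mono) auto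
        then show ?thesis unfolding inth_eq by (simp add: algebra_simps)
      qed
      have Kle: "AE x in \<mu>1. ln (K x) \<le> h x"
        using good
      proof eventually_elim
        case (elim x)
        then show ?case unfolding h_def H_def using ptw_main[of "F x" "G x" z p] z0 p
          by (simp add: algebra_simps)
      qed
      have hfin: "(\<integral>\<^sup>+ x. ennreal (h x) \<partial>\<mu>1) \<noteq> \<infinity>"
        using inth unfolding real_integrable_def by simp
      have "(\<integral>\<^sup>+ x. ennreal (ln (K x)) \<partial>\<mu>1) \<le> (\<integral>\<^sup>+ x. ennreal (h x) \<partial>\<mu>1)"
        using Kle by (intro nn_integral_mono_AE) (auto elim!: eventually_mono intro: ennreal_leI)
      then have posK: "(\<integral>\<^sup>+ x. ennreal (ln (K x)) \<partial>\<mu>1) \<noteq> \<infinity>"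
        using hfin by (auto simp: top_unique)
      have intK: "integrable \<mu>1 (\<lambda>x. ln (K x))"
        unfolding real_integrable_def using posK negK' by simp
      have "Ent \<mu>1 \<mu>2 = ereal (\<integral>x. ln (K x) \<partial>\<mu>1)"
        unfolding Ent12 by (rule parts_integral[OF intK])
      also have "\<dots> \<le> ereal (\<integral>x. h x \<partial>\<mu>1)"
        using integral_mono_AE[OF intK inth Kle] by simp
      also have "\<dots> \<le> ereal (p * (\<integral>x. ln (F x) \<partial>\<mu>1) + (p - 1) * ln z)"
        using hle by simp
      also have "\<dots> = ereal p * Ent \<mu>1 \<mu> + ereal (p - 1) * eln Z"
        unfolding EntF elnz by simp
      finally show ?thesis .
    qed
  qed
  then show ?thesis unfolding rhs .
qed
end
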